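(* Let $\rho^{(2)}_n := 6-4(1+\frac1n)^{3/2}-4(1-\frac1n)^{3/2}+(1+\frac2n)^{3/2}+(1-\frac2n)^{3/2}$ for $n\ge2$. Let $\rho=\{\rho_n\}_{n\ge2}$ be a Rellich weight such that $\rho_n\ge\rho^{(2)}_n$ for all $n\ge2$. Then \[ \sum_{n=2}^{\infty}n^3\left(\rho_n-\rho^{(2)}_n\right)\le 8\sqrt2-3\sqrt3 . \]
   Context: $H_0^2(\mathbb{N}_0):=\{u\in\ell^2(\mathbb{N}_0): u_0=u_1=0\}$. The discrete Dirichlet Laplacian acts by $(-\Delta u)_0=2u_0-u_1$, $(-\Delta u)_n=-u_{n-1}+2u_n-u_{n+1}$ for $n\ge1$. A positive sequence $\{\rho_n\}_{n\ge2}$ is called a Rellich weight if $\sum_{n=1}^\infty|(-\Delta u)_n|^2\ge\sum_{n=2}^\infty\rho_n|u_n|^2$ for all $u\in H_0^2(\mathbb{N}_0)$. *)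

theory Defs
  imports "HOL-Analysis.Analysis"
begin

definition H02 :: "(nat \<Rightarrow> real) set" where
  "H02 = {u. summable (\<lambda>n. (u n)\<^sup>2) \<and> u 0 = 0 \<and> u 1 = 0}"

definition neg_lap :: "(nat \<Rightarrow> real) \<Rightarrow> nat \<Rightarrow> real" where
  "neg_lap u n = (if n = 0 then 2 * u 0 - u 1 else - u (n - 1) + 2 * u n - u (n + 1))"

definition rellich_weight :: "(nat \<Rightarrow> real) \<Rightarrow> bool" where
  "rellich_weight \<rho> \<longleftrightarrow> (\<forall>n\<ge>2. \<rho> n > 0) \<and>
     (\<forall>u\<in>H02. summable (\<lambda>n. \<rho> (n + 2) * (u (n + 2))\<^sup>2) \<and>
        (\<Sum>n. \<rho> (n + 2) * (u (n + 2))\<^sup>2) \<le> (\<Sum>n. (neg_lap u (n + 1))\<^sup>2))"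

definition rho2 :: "nat \<Rightarrow> real" where
  "rho2 n = 6 - 4 * (1 + 1 / real n) powr (3/2) - 4 * (1 - 1 / real n) powr (3/2)
            + (1 + 2 / real n) powr (3/2) + (1 - 2 / real n) powr (3/2)"

end

theory Submission
  imports Defs
begin


definition W :: "nat \<Rightarrow> real" where "W n = real n * sqrt (real n)"

lemma powr32: "x \<ge> 0 \<Longrightarrow> x powr (3/2) = x * sqrt x"
proof -
  assume x: "x \<ge> 0"
  have "x powr (3/2) = x powr 1 * x powr (1/2)"
    using x powr_add[of x 1 "1/2"] by (cases "x = 0") simp_all
  also have "\<dots> = x * sqrt x" using x by (cases "x = 0") (simp_all add: powr_half_sqrt)
  finally show ?thesis .
qed

lemma rho2_stencil:
  "rho2 (m+2) * W (m+2) = W m - 4 * W (m+1) + 6 * W (m+2) - 4 * W (m+3) + W (m+4)"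
proof -
  define n where "n = real (m+2)"
  have n0: "n > 0" unfolding n_def by simp
  let ?p = "\<lambda>x::real. x powr (3/2)"
  have Wp: "W k = ?p (real k)" for k by (simp add: W_def powr32)
  have pn: "?p n > 0" using n0 by simp
  have e1: "1 + 1 / n = (n+1)/n" "1 - 1/n = (n-1)/n" "1 + 2/n = (n+2)/n" "1 - 2/n = (n-2)/n"
    using n0 by (simp_all add: field_simps)
  have ge: "n - 1 \<ge> 0" "n - 2 \<ge> 0" unfolding n_def by simp_all
  have d: "?p (a/n) = ?p a / ?p n" if "a \<ge> 0" for a using that n0 by (simp add: powr_divide)
  have "rho2 (m+2) = 6 - 4 * (?p (n+1) / ?p n) - 4 * (?p (n-1) / ?p n) + ?p (n+2) / ?p n + ?p (n-2) / ?p n"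
    unfolding rho2_def n_def[symmetric] e1 using d ge n0 by simp
  hence "rho2 (m+2) * ?p n = 6 * ?p n - 4 * ?p (n+1) - 4 * ?p (n-1) + ?p (n+2) + ?p (n-2)"
    using pn by (simp add: field_simps)
  moreover have "n + 1 = real (m+3)" "n - 1 = real (m+1)" "n + 2 = real (m+4)" "n - 2 = real m"
    unfolding n_def by simp_all
  ultimately show ?thesis unfolding Wp n_def by (simp add: ac_simps)
qed

lemma tele_pt:
  fixes p0 p1 p2 p3 w0 w1 w2 w3 w4 w5 :: real
  shows "((w0*p0 - 2*(w1*p1) + w2*p2)^2 - p2^2 * w2 * (w0 - 4*w1 + 6*w2 - 4*w3 + w4))
   - (4*w0*w1*(p1-p0)^2 - w0*w2*(p2-p0)^2)
   = (0 - p1^2*w1^2 - 4*p1*p2*w1*w2 - 5*p2^2*w2^2 + 4*p2^2*w1*w2 + 4*p1^2*w1*w2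
      + 4*p2^2*w2*w3 - p1^2*w1*w3 - p2^2*w2*w4)
   - (0 - p0^2*w0^2 - 4*p0*p1*w0*w1 - 5*p1^2*w1^2 + 4*p1^2*w0*w1 + 4*p0^2*w0*w1
      + 4*p1^2*w1*w2 - p0^2*w0*w2 - p1^2*w1*w3)"
  by (simp add: algebra_simps power2_eq_square)



lemma poly_bound:
  fixes x k b b' P R :: real
  assumes x3: "x \<ge> 3" and kx: "k \<ge> x" and bdef: "b = k/x - 1" and b'0: "0 \<le> b'" and b'b: "b' \<le> b"
    and bd: "b - b' \<le> k/(x*(x+1))" and P0: "0 \<le> P" and Pu: "P \<le> (x^2-x)*(x-1/2)"
    and Rl: "(x^2-1)*(x-1/x) \<le> R" and Ru: "R \<le> x^3"
  shows "P*b^2 - R*b*b' \<le> k*(k-x) - 3/2*(k-x)^2 + 11/4*k*b"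
proof -
  have b0: "b \<ge> 0" using b'0 b'b by linarith
  have bx: "b = (k-x)/x" using bdef x3 by (simp add: field_simps)
  have e: "P*b^2 - R*b*b' = (P - R)*b^2 + R*b*(b-b')" by (simp add: algebra_simps power2_eq_square)
  have h1: "P - R \<le> -3/2*x^2 + 5/2*x"
  proof -
    have "(x^2-x)*(x-1/2) - (x^2-1)*(x-1/x) = -3/2*x^2 + 5/2*x - 1/x"
      using x3 by (simp add: field_simps power2_eq_square power3_eq_cube)
    moreover have "1/x \<ge> 0" using x3 by simp
    ultimately show ?thesis using Pu Rl by linarith
  qed
  have h1': "(P - R)*b^2 \<le> (-3/2*x^2 + 5/2*x)*b^2" using h1 by (simp add: mult_right_mono)
  have R0: "R \<ge> 0"
  proof -
    have xx: "x*x \<ge> 3*3" using x3 by (intro mult_mono) auto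
    have "x^2 - 1 \<ge> 0" using xx by (simp add: power2_eq_square)
    moreover have "x - 1/x \<ge> 0"
    proof -
      have "1/x \<le> 1" using x3 by simp
      thus ?thesis using x3 by linarith
    qed
    ultimately show ?thesis using Rl by (smt (verit) mult_nonneg_nonneg)
  qed
  have h2: "R*b*(b-b') \<le> x^3*b*(k/(x*(x+1)))"
  proof -
    have "R*b*(b-b') \<le> R*b*(k/(x*(x+1)))" using bd R0 b0 by (intro mult_left_mono) simp_all
    also have "\<dots> \<le> x^3*b*(k/(x*(x+1)))"
      using Ru b0 kx x3 by (intro mult_right_mono) (simp_all add: mult_right_mono)
    finally show ?thesis .
  qed
  have h3: "x^3*b*(k/(x*(x+1))) \<le> k*(k-x)"
  proof -
    have xp: "x > 0" "x + 1 > 0" using x3 by simp_all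
    have "x^3*b*(k/(x*(x+1))) = (x/(x+1)) * (k*(k-x))" unfolding bx
      using xp by (simp add: power3_eq_cube)
    also have "\<dots> \<le> 1 * (k*(k-x))" using x3 kx by (intro mult_right_mono) simp_all
    finally show ?thesis by simp
  qed
  have h4: "(-3/2*x^2 + 5/2*x)*b^2 \<le> - 3/2*(k-x)^2 + 11/4*k*b"
  proof -
    have "(-3/2*x^2 + 5/2*x)*b^2 = - 3/2*(k-x)^2 + 5/2*((k-x)*b)" using x3 unfolding bx
      by (simp add: field_simps power2_eq_square)
    moreover have "(k-x)*b \<le> k*b" using x3 b0 by (simp add: mult_right_mono)
    moreover have "k*b \<ge> 0" using b0 kx x3 by simp
    ultimately show ?thesis by linarith
  qed
  show ?thesis using e h1' h2 h3 h4 by linarith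
qed

lemma harm_part:
  "(\<Sum>n<N+d. if N \<le> n then inverse (real (Suc n)) else 0) = harm (N+d) - (harm N :: real)"
proof (induction d)
  case 0
  then show ?case by simp
next
  case (Suc d)
  then show ?case by (simp add: harm_Suc)
qed

lemma Q_part:
  fixes k :: real and N K :: nat
  assumes "N \<le> K" and "k = real K"
  shows "(\<Sum>n<K. if N \<le> n then k*(k - (real n+1)) - 3/2*(k-(real n+1))^2 else 0)
     = (k - (real N+1))*(k - real N)*(real N + 1/2)/2"
proof -
  define \<Phi> where "\<Phi> x = (k-x)*(k-x+1)*(x-1/2)/2" for x :: real
  define g where "g n = (if N \<le> n then \<Phi> (real n + 1) else \<Phi> (real N + 1))" for n :: nat
  have "(if N \<le> n then k*(k - (real n+1)) - 3/2*(k-(real n+1))^2 else 0) = g n - g (Suc n)" for n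
    unfolding g_def \<Phi>_def by (auto simp: field_simps power2_eq_square le_Suc_eq)
  hence "(\<Sum>n<K. if N \<le> n then k*(k - (real n+1)) - 3/2*(k-(real n+1))^2 else 0) = g 0 - g K"
    by (simp add: sum_lessThan_telescope')
  also have "g K = 0" using assms unfolding g_def \<Phi>_def by simp
  also have "g 0 = \<Phi> (real N + 1)" unfolding g_def by simp
  finally show ?thesis unfolding \<Phi>_def by (simp add: field_simps)
qed



lemma W_small: "W 0 = 0" "W 1 = 1" "W (Suc 0) = 1" "W 2 = 2 * sqrt 2" "W 3 = 3 * sqrt 3"
  by (simp_all add: W_def)

lemma W_sq: "(W n)^2 = real n ^ 3"
  by (simp add: W_def power_mult_distrib power3_eq_cube power2_eq_square)

lemma W_nonneg: "W n \<ge> 0" by (simp add: W_def)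

lemma P_bound:
  fixes n :: nat defines "x \<equiv> real n + 1"
  shows "W n * W (n+1) \<le> (x^2-x)*(x-1/2)"
proof -
  have a: "x^2 - x = real n * (real n + 1)" by (simp add: x_def power2_eq_square algebra_simps)
  have "W n * W (n+1) = (real n * (real n + 1)) * sqrt (real n * (real n + 1))"
    by (simp add: W_def real_sqrt_mult ac_simps)
  hence "W n * W (n+1) = (x^2-x) * sqrt (x^2-x)" unfolding a .
  moreover have "sqrt (x^2-x) \<le> x - 1/2"
    by (rule real_le_lsqrt) (auto simp: x_def power2_eq_square algebra_simps)
  moreover have "x^2 - x \<ge> 0" unfolding x_def by (simp add: power2_eq_square algebra_simps)
  ultimately show ?thesis by (simp add: mult_left_mono)
qed

lemma R_bounds:
  fixes n :: nat defines "x \<equiv> real n + 1"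
  assumes "n \<ge> 1"
  shows "(x^2-1)*(x-1/x) \<le> W n * W (n+2)" "W n * W (n+2) \<le> x^3"
proof -
  have x1: "x \<ge> 2" using assms(2) unfolding x_def by simp
  have a: "x^2 - 1 = real n * (real n + 2)" by (simp add: x_def power2_eq_square algebra_simps)
  have "W n * W (n+2) = (real n * (real n + 2)) * sqrt (real n * (real n + 2))"
    by (simp add: W_def real_sqrt_mult ac_simps)
  hence e: "W n * W (n+2) = (x^2-1) * sqrt (x^2-1)" unfolding a .
  have pos: "x^2 - 1 \<ge> 0" unfolding a by simp
  have x2: "x^2 \<ge> 1" using pos by simp
  have "x - 1/x \<le> sqrt (x^2-1)"
  proof (rule real_le_rsqrt)
    have "(x - 1/x)^2 = x^2 - 2 + 1/x^2" using x1 by (simp add: power2_eq_square field_simps)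
    moreover have "1/x^2 \<le> 1" using x2 by (simp add: divide_le_eq_1)
    ultimately show "(x - 1/x)^2 \<le> x^2 - 1" by linarith
  qed
  thus "(x^2-1)*(x-1/x) \<le> W n * W (n+2)" unfolding e using pos by (simp add: mult_left_mono)
  have "sqrt (x^2-1) \<le> x" using x1 by (intro real_le_lsqrt) auto
  hence "(x^2-1) * sqrt (x^2-1) \<le> (x^2-1) * x" using pos by (simp add: mult_left_mono)
  also have "\<dots> \<le> x^3" using x1 by (simp add: power3_eq_cube power2_eq_square algebra_simps)
  finally show "W n * W (n+2) \<le> x^3" unfolding e .
qed



lemma core:
  fixes \<rho> :: "nat \<Rightarrow> real" and N K :: nat
  assumes rw: "rellich_weight \<rho>" and ge: "\<And>n. n \<ge> 2 \<Longrightarrow> \<rho> n \<ge> rho2 n"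
    and N3: "N \<ge> 3" and KN: "K \<ge> N + 2"
  defines "bt \<equiv> \<lambda>m::nat. if N \<le> m \<and> m < K then real K / (real m + 1) - 1 else 0"
  defines "S \<equiv> \<Sum>m<K. bt m"
  shows "S > 0 \<and> (\<Sum>n<N-1. real(n+2)^3 * (\<rho>(n+2) - rho2(n+2)))
     \<le> 8* sqrt 2 - 3* sqrt 3 + 2*(real N+1)*(real K)^2/S^2 + 11*real K/S"
proof -
  define C where "C = 8* sqrt 2 - 3* sqrt 3"
  have bt0: "bt m \<ge> 0" for m
  proof (cases "N \<le> m \<and> m < K")
    case True
    hence "real m + 1 \<le> real K" by simp
    hence "real K / (real m + 1) \<ge> 1" by simp
    thus ?thesis using True by (simp add: bt_def)
  qed (simp add: bt_def)
  have btN: "bt N > 0"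
  proof -
    have "real N + 1 < real K" using KN by simp
    hence "real K / (real N + 1) > 1" by simp
    thus ?thesis using KN by (simp add: bt_def)
  qed
  have Spos: "S > 0"
  proof -
    have "bt N \<le> S" unfolding S_def by (rule member_le_sum) (use KN bt0 in auto)
    thus ?thesis using btN by simp
  qed
  define psi where "psi m = (if m < 2 then 0 else (\<Sum>j\<in>{m..<K}. bt j)/S)" for m
  define u where "u m = W m * psi m" for m
  have psi1: "psi m = 1" if "2 \<le> m" "m \<le> N" for m
  proof -
    have "(\<Sum>j\<in>{m..<K}. bt j) = S" unfolding S_def
      by (rule sum.mono_neutral_left) (use that in \<open>auto simp: bt_def\<close>)
    thus ?thesis using that Spos by (simp add: psi_def)
  qed
  have psi0: "psi m = 0" if "m \<ge> K" for m using that by (simp add: psi_def)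
  have psi01: "psi 0 = 0" "psi 1 = 0" by (simp_all add: psi_def)
  have psid: "psi (Suc m) - psi m = - bt m / S" if "m \<ge> 2" for m
  proof (cases "m < K")
    case True
    have "(\<Sum>j\<in>{m..<K}. bt j) = bt m + (\<Sum>j\<in>{Suc m..<K}. bt j)"
      using True by (rule sum.atLeast_Suc_lessThan)
    thus ?thesis using that by (simp add: psi_def add_divide_distrib)
  next
    case False
    thus ?thesis using psi0[of m] psi0[of "Suc m"] by (simp add: bt_def)
  qed
  have u0: "u m = 0" if "m \<ge> K" for m using psi0[OF that] by (simp add: u_def)
  have uH: "u \<in> H02"
  proof -
    have "summable (\<lambda>n. (u n)^2)" by (rule summable_finite[of "{..<K}"]) (auto simp: u0)
    moreover have "u 0 = 0" "u 1 = 0" unfolding u_def using psi01 by simp_all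
    ultimately show ?thesis unfolding H02_def by simp
  qed
  have R1: "(\<Sum>n. \<rho>(n+2)*(u(n+2))^2) \<le> (\<Sum>n. (neg_lap u (n+1))^2)"
    using rw uH unfolding rellich_weight_def by blast
  have s1: "(\<Sum>n. \<rho>(n+2)*(u(n+2))^2) = (\<Sum>n<K. \<rho>(n+2)*(u(n+2))^2)"
    by (rule suminf_finite) (auto simp: u0)
  have nl: "neg_lap u (n+1) = -(u n - 2*u(n+1) + u(n+2))" for n by (simp add: neg_lap_def)
  have s2: "(\<Sum>n. (neg_lap u (n+1))^2) = (\<Sum>n<K. (neg_lap u (n+1))^2)"
    by (rule suminf_finite) (auto simp: u0 neg_lap_def)
  define B where "B n = 4*W n*W(n+1)*(psi(n+1)-psi n)^2 - W n*W(n+2)*(psi(n+2)-psi n)^2" for n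
  define G where "G n = 0 - psi n^2*W n^2 - 4*psi n*psi (n+1)*W n*W (n+1) - 5*psi (n+1)^2*W (n+1)^2
      + 4*psi (n+1)^2*W n*W (n+1) + 4*psi n^2*W n*W (n+1)
      + 4*psi (n+1)^2*W (n+1)*W (n+2) - psi n^2*W n*W (n+2) - psi (n+1)^2*W (n+1)*W (n+3)" for n
  have AB: "(neg_lap u (n+1))^2 - rho2(n+2)*(u(n+2))^2 - B n = G (Suc n) - G n" for n
  proof -
    have st: "rho2(n+2)*(u(n+2))^2 = psi(n+2)^2 * W(n+2) * (W n - 4 * W (n+1) + 6 * W (n+2) - 4 * W (n+3) + W (n+4))"
      unfolding rho2_stencil[symmetric] u_def by (simp add: power2_eq_square)
    have G1: "G (Suc n) = 0 - psi (n+1)^2*W (n+1)^2 - 4*psi (n+1)*psi (n+2)*W (n+1)*W (n+2) - 5*psi (n+2)^2*W (n+2)^2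
      + 4*psi (n+2)^2*W (n+1)*W (n+2) + 4*psi (n+1)^2*W (n+1)*W (n+2)
      + 4*psi (n+2)^2*W (n+2)*W (n+3) - psi (n+1)^2*W (n+1)*W (n+3) - psi (n+2)^2*W (n+2)*W (n+4)"
      unfolding G_def by (simp add: eval_nat_numeral)
    show ?thesis unfolding st G1 nl
      using tele_pt[of "W n" "psi n" "W (n+1)" "psi (n+1)" "W (n+2)" "psi (n+2)" "W (n+3)" "W (n+4)"]
      unfolding B_def G_def u_def by (simp add: power2_eq_square algebra_simps)
  qed
  have GK: "G K = 0" unfolding G_def using psi0[of K] psi0[of "K+1"] by simp
  have G0: "G 0 = 0" unfolding G_def using psi01 by simp
  have tsum: "(\<Sum>n<K. (neg_lap u (n+1))^2 - rho2(n+2)*(u(n+2))^2) = (\<Sum>n<K. B n)"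
  proof -
    have "(\<Sum>n<K. (neg_lap u (n+1))^2 - rho2(n+2)*(u(n+2))^2) = (\<Sum>n<K. B n + (G (Suc n) - G n))"
      by (rule sum.cong) (use AB in \<open>auto simp: algebra_simps\<close>)
    also have "\<dots> = (\<Sum>n<K. B n) + (G K - G 0)"
      by (simp add: sum.distrib sum_lessThan_telescope)
    finally show ?thesis using GK G0 by simp
  qed
  have main: "(\<Sum>n<K. (\<rho>(n+2) - rho2(n+2))*(u(n+2))^2) \<le> (\<Sum>n<K. B n)"
  proof -
    have "(\<Sum>n<K. (\<rho>(n+2) - rho2(n+2))*(u(n+2))^2)
        = (\<Sum>n<K. \<rho>(n+2)*(u(n+2))^2) - (\<Sum>n<K. rho2(n+2)*(u(n+2))^2)"
      by (simp add: sum_subtractf[symmetric] algebra_simps)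
    also have "\<dots> \<le> (\<Sum>n<K. (neg_lap u (n+1))^2) - (\<Sum>n<K. rho2(n+2)*(u(n+2))^2)"
      using R1 s1 s2 by simp
    also have "\<dots> = (\<Sum>n<K. B n)" using tsum by (simp add: sum_subtractf)
    finally show ?thesis .
  qed
  have lower: "(\<Sum>n<N-1. real(n+2)^3 * (\<rho>(n+2) - rho2(n+2))) \<le> (\<Sum>n<K. (\<rho>(n+2) - rho2(n+2))*(u(n+2))^2)"
  proof -
    have "(\<Sum>n<N-1. real(n+2)^3 * (\<rho>(n+2) - rho2(n+2))) = (\<Sum>n<N-1. (\<rho>(n+2) - rho2(n+2))*(u(n+2))^2)"
    proof (rule sum.cong)
      fix n assume "n \<in> {..<N-1}"
      hence "psi (n+2) = 1" by (intro psi1) auto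
      thus "real(n+2)^3 * (\<rho>(n+2) - rho2(n+2)) = (\<rho>(n+2) - rho2(n+2))*(u(n+2))^2"
        unfolding u_def by (simp add: W_sq)
    qed simp
    also have "\<dots> \<le> (\<Sum>n<K. (\<rho>(n+2) - rho2(n+2))*(u(n+2))^2)"
      by (rule sum_mono2) (use KN ge in auto)
    finally show ?thesis .
  qed
  define tt where "tt n = (if N \<le> n \<and> n < K then real K*(real K - (real n+1)) - 3/2*(real K-(real n+1))^2 + 11/4*real K*bt n else 0)" for n
  have Bb: "B n \<le> (if n = 1 then C else 0) + 4/S^2 * tt n" for n
  proof -
    consider "n = 0" | "n = 1" | "n \<ge> 2" by linarith
    thus ?thesis
    proof cases
      case 1
      thus ?thesis using N3 by (simp add: B_def tt_def W_small)
    next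
      case 2
      have "psi 2 = 1" "psi 3 = 1" using N3 by (auto intro: psi1)
      moreover have e: "(1::nat)+1 = 2" "(1::nat)+2 = 3" by simp_all
      ultimately have "B 1 = C" unfolding B_def C_def e using psi01 by (simp add: W_small)
      thus ?thesis using 2 N3 by (simp add: tt_def)
    next
      case 3
      define P where "P = W n * W (n+1)"
      define R where "R = W n * W (n+2)"
      have P0: "P \<ge> 0" unfolding P_def by (simp add: W_nonneg)
      have R0: "R \<ge> 0" unfolding R_def by (simp add: W_nonneg)
      have a1: "psi (n+1) - psi n = - bt n / S" using psid[OF 3] by simp
      have a2: "psi (n+2) - psi n = - (bt n + bt (n+1)) / S"
        using psid[OF 3] psid[of "Suc n"] 3 by (simp add: diff_divide_distrib algebra_simps)
      have "B n = (4*P*(bt n)^2 - R*(bt n + bt (n+1))^2) / S^2"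
        unfolding B_def a1 a2 P_def R_def using Spos by (simp add: field_simps power2_eq_square)
      also have "\<dots> \<le> 4 * (P*(bt n)^2 - R*bt n*bt (n+1)) / S^2"
      proof (rule divide_right_mono)
        have "4*(bt n * bt (n+1)) \<le> (bt n + bt (n+1))^2"
          using sum_squares_ge_zero[of "bt n - bt (n+1)" 0] by (simp add: power2_eq_square algebra_simps)
        hence "R*(4*(bt n * bt (n+1))) \<le> R*(bt n + bt (n+1))^2" using R0 by (simp add: mult_left_mono)
        thus "4*P*(bt n)^2 - R*(bt n + bt (n+1))^2 \<le> 4 * (P*(bt n)^2 - R*bt n*bt (n+1))"
          by (simp add: algebra_simps)
      qed simp
      also have "\<dots> \<le> 4 * tt n / S^2"
      proof -
        have "P*(bt n)^2 - R*bt n*bt (n+1) \<le> tt n"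
        proof (cases "N \<le> n \<and> n < K")
          case True
          define x where "x = real n + 1"
          have x3: "x \<ge> 3" using True N3 unfolding x_def by simp
          have kx: "real K \<ge> x" using True unfolding x_def by simp
          have bdef: "bt n = real K / x - 1" using True unfolding bt_def x_def by simp
          have b'b: "bt (n+1) \<le> bt n \<and> bt n - bt (n+1) \<le> real K/(x*(x+1))"
          proof (cases "n + 1 < K")
            case True2: True
            have "bt (n+1) = real K / (x+1) - 1" using True True2 unfolding bt_def x_def by simp
            moreover have "real K / (x+1) \<le> real K / x" using x3 by (intro divide_left_mono) auto
            moreover have "real K / x - real K / (x+1) = real K/(x*(x+1))" using x3 by (simp add: field_simps)
            ultimately show ?thesis using bdef by simp
          next
            case False
            hence "n + 1 = K" using True by simp
            hence "bt n = 0" "bt (n+1) = 0" unfolding bt_def using True by auto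
            thus ?thesis using x3 by simp
          qed
          have "P*(bt n)^2 - R*bt n*bt (n+1) \<le> real K*(real K-x) - 3/2*(real K-x)^2 + 11/4*real K*bt n"
            apply (rule poly_bound[OF x3 kx bdef bt0])
            using b'b P0 P_bound[of n] R_bounds[of n] 3 unfolding P_def R_def x_def by auto
          thus ?thesis using True unfolding tt_def x_def by simp
        next
          case False
          hence "bt n = 0" unfolding bt_def by auto
          moreover have "tt n = 0" unfolding tt_def by (rule if_not_P[OF False])
          ultimately show ?thesis by simp
        qed
        thus ?thesis using Spos by (simp add: divide_right_mono)
      qed
      finally show ?thesis using 3 by simp
    qed
  qed
  have sumB: "(\<Sum>n<K. B n) \<le> C + 4/S^2 * (\<Sum>n<K. tt n)"
  proof -
    have "(\<Sum>n<K. B n) \<le> (\<Sum>n<K. (if n = 1 then C else 0) + 4/S^2 * tt n)"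
      by (rule sum_mono) (rule Bb)
    also have "\<dots> = C + 4/S^2 * (\<Sum>n<K. tt n)"
      using KN by (simp add: sum.distrib sum_distrib_left)
    finally show ?thesis .
  qed
  have sumtt: "(\<Sum>n<K. tt n) = (real K - (real N+1))*(real K - real N)*(real N + 1/2)/2 + 11/4*real K*S"
  proof -
    have "(\<Sum>n<K. tt n) = (\<Sum>n<K. (if N \<le> n then real K*(real K - (real n+1)) - 3/2*(real K-(real n+1))^2 else 0) + 11/4*real K*bt n)"
    proof (rule sum.cong)
      fix n assume n: "n \<in> {..<K}"
      show "tt n = (if N \<le> n then real K*(real K - (real n+1)) - 3/2*(real K-(real n+1))^2 else 0) + 11/4*real K*bt n"
        using n by (cases "N \<le> n") (simp_all add: tt_def bt_def)
    qed simp
    also have "\<dots> = (\<Sum>n<K. (if N \<le> n then real K*(real K - (real n+1)) - 3/2*(real K-(real n+1))^2 else 0)) + 11/4*real K*S"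
      by (simp add: sum.distrib sum_distrib_left S_def)
    also have "(\<Sum>n<K. (if N \<le> n then real K*(real K - (real n+1)) - 3/2*(real K-(real n+1))^2 else 0))
       = (real K - (real N+1))*(real K - real N)*(real N + 1/2)/2"
      by (rule Q_part) (use KN in auto)
    finally show ?thesis .
  qed
  have Qle: "(real K - (real N+1))*(real K - real N)*(real N + 1/2)/2 \<le> (real K)^2*(real N+1)/2"
  proof -
    have "(real K - (real N+1))*(real K - real N) \<le> real K * real K"
      using KN by (intro mult_mono) auto
    hence "(real K - (real N+1))*(real K - real N)*(real N + 1/2) \<le> (real K * real K)*(real N+1)"
      using KN by (intro mult_mono) auto
    thus ?thesis by (simp add: power2_eq_square)
  qed
  have "(\<Sum>n<N-1. real(n+2)^3 * (\<rho>(n+2) - rho2(n+2))) \<le> C + 4/S^2 * ((real K)^2*(real N+1)/2 + 11/4*real K*S)"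
  proof -
    have "4/S^2 * (\<Sum>n<K. tt n) \<le> 4/S^2 * ((real K)^2*(real N+1)/2 + 11/4*real K*S)"
      unfolding sumtt using Qle by (intro mult_left_mono) auto
    thus ?thesis using lower main sumB by linarith
  qed
  also have "C + 4/S^2 * ((real K)^2*(real N+1)/2 + 11/4*real K*S) = C + 2*(real N+1)*(real K)^2/S^2 + 11*real K/S"
    using Spos by (simp add: field_simps power2_eq_square)
  finally show ?thesis using Spos unfolding C_def by simp
qed



lemma S_lower:
  fixes N K :: nat assumes NK: "N \<le> K"
  shows "(\<Sum>m<K. if N \<le> m \<and> m < K then real K / (real m + 1) - 1 else 0) \<ge> real K * (harm K - harm N) - real K"
proof -
  have "(\<Sum>m<K. real K * (if N \<le> m then inverse (real (Suc m)) else 0) - 1)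
      \<le> (\<Sum>m<K. if N \<le> m \<and> m < K then real K / (real m + 1) - 1 else 0)"
    by (rule sum_mono) (auto simp: field_simps)
  moreover have "(\<Sum>m<K. real K * (if N \<le> m then inverse (real (Suc m)) else 0) - 1)
      = real K * (\<Sum>m<K. if N \<le> m then inverse (real (Suc m)) else 0) - real K"
    by (simp add: sum_subtractf sum_distrib_left)
  moreover have "(\<Sum>m<K. if N \<le> m then inverse (real (Suc m)) else 0) = harm K - harm N"
    using harm_part[of N "K - N"] NK by simp
  ultimately show ?thesis by simp
qed

theorem theorem3p2:
  fixes \<rho> :: "nat \<Rightarrow> real"
  assumes "rellich_weight \<rho>"
    and "\<And>n. n \<ge> 2 \<Longrightarrow> \<rho> n \<ge> rho2 n"
  shows "summable (\<lambda>n. (real (n + 2))^3 * (\<rho> (n + 2) - rho2 (n + 2)))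
    \<and> (\<Sum>n. (real (n + 2))^3 * (\<rho> (n + 2) - rho2 (n + 2))) \<le> 8 * sqrt 2 - 3 * sqrt 3"
proof -
  define C where "C = 8 * sqrt 2 - 3 * sqrt 3"
  define f where "f n = (real (n + 2))^3 * (\<rho> (n + 2) - rho2 (n + 2))" for n
  have f0: "f n \<ge> 0" for n unfolding f_def using assms(2)[of "n+2"] by simp
  have key: "(\<Sum>n<N-1. f n) \<le> C + e" if N3: "N \<ge> 3" and e: "e > 0" for N e
  proof -
    define H where "H = (2*real N + 13)/e + 1"
    have H1: "H \<ge> 1" unfolding H_def using e by simp
    have He: "(2*real N + 13)/H \<le> e"
    proof -
      have "(2*real N + 13)/e \<le> H" unfolding H_def by simp
      hence "2*real N + 13 \<le> H * e" using e by (simp add: divide_le_eq)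
      thus ?thesis using H1 by (simp add: divide_le_eq mult.commute)
    qed
    have "eventually (\<lambda>K. harm N + 1 + H \<le> (harm K :: real)) sequentially"
      using harm_at_top unfolding filterlim_at_top by blast
    then obtain K0 where K0: "\<And>K. K \<ge> K0 \<Longrightarrow> harm N + 1 + H \<le> (harm K :: real)"
      unfolding eventually_sequentially by blast
    define K where "K = max K0 (N+2)"
    have KN: "K \<ge> N + 2" unfolding K_def by simp
    have hK: "harm N + 1 + H \<le> (harm K :: real)" using K0 unfolding K_def by simp
    define S where "S = (\<Sum>m<K. if N \<le> m \<and> m < K then real K / (real m + 1) - 1 else 0)"
    have c: "S > 0 \<and> (\<Sum>n<N-1. real(n+2)^3 * (\<rho>(n+2) - rho2(n+2)))
     \<le> 8 * sqrt 2 - 3 * sqrt 3 + 2*(real N+1)*(real K)^2/S^2 + 11*real K/S"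
      unfolding S_def by (rule core[OF assms N3 KN])
    have Spos: "S > 0" using c by simp
    have Sl: "S \<ge> real K * H"
    proof -
      have "S \<ge> real K * (harm K - harm N) - real K" unfolding S_def by (rule S_lower) (use KN in simp)
      moreover have "real K * (harm K - harm N) \<ge> real K * (1 + H)" using hK by (intro mult_left_mono) auto
      ultimately show ?thesis by (simp add: algebra_simps)
    qed
    have Kpos: "real K > 0" using KN by simp
    define q where "q = real K / S"
    have q0: "q \<ge> 0" unfolding q_def using Spos by simp
    have qH: "q \<le> 1/H"
      unfolding q_def using Sl Spos H1 Kpos by (simp add: divide_simps mult.commute)
    have q2: "q^2 \<le> 1/H"
    proof -
      have "q^2 \<le> (1/H)^2" using q0 qH by (intro power_mono)
      also have "\<dots> \<le> 1/H" using H1 by (simp add: power2_eq_square divide_simps)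
      finally show ?thesis .
    qed
    have "2*(real N+1)*(real K)^2/S^2 + 11*real K/S = 2*(real N+1)*q^2 + 11*q"
      unfolding q_def by (simp add: power_divide)
    also have "\<dots> \<le> 2*(real N+1)*(1/H) + 11*(1/H)"
      using q2 qH by (intro add_mono mult_left_mono) auto
    also have "\<dots> = (2*real N + 13)/H" by (simp add: add_divide_distrib[symmetric] algebra_simps)
    finally have "2*(real N+1)*(real K)^2/S^2 + 11*real K/S \<le> e" using He by linarith
    thus ?thesis using c unfolding f_def C_def by simp
  qed
  have bnd: "(\<Sum>n<J. f n) \<le> C" for J
  proof (rule field_le_epsilon)
    fix e :: real assume e: "e > 0"
    have "(\<Sum>n<J. f n) \<le> (\<Sum>n<(J+3)-1. f n)" by (rule sum_mono2) (use f0 in auto)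
    also have "\<dots> \<le> C + e" by (rule key) (use e in auto)
    finally show "(\<Sum>n<J. f n) \<le> C + e" .
  qed
  have sf: "summable f" by (rule summableI_nonneg_bounded[OF f0 bnd])
  have "suminf f \<le> C" by (rule suminf_le_const[OF sf bnd])
  thus ?thesis using sf unfolding f_def C_def by simp
qed

end
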